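(* Let $(W,S)$ be a Coxeter system with length function $\ell$ and Bruhat order $\le$. Let $x,y\in W$ and $s,t\in S$ be such that $y=sxt$ and $\ell(x)=\ell(y)$. If $x'\in W$ satisfies $x'\le x$, then either $x'\le y$, or $sx't\le y$ with $\ell(sx't)\le \ell(x')$.
   Context: Standard notions: Coxeter system, length function, Bruhat order. *)

theory Defs
  imports "HOL-Algebra.Multiplicative_Group" "HOL-Algebra.Generated_Groups"
begin

definition wprod :: "('a, 'b) monoid_scheme \<Rightarrow> 'a list \<Rightarrow> 'a" where
  "wprod G ws = foldr (\<lambda>x y. x \<otimes>\<^bsub>G\<^esub> y) ws \<one>\<^bsub>G\<^esub>"

text \<open>Coxeter matrix entry m(s,t) = order of st (0 encodes infinity).\<close>
definition cox_m :: "('a, 'b) monoid_scheme \<Rightarrow> 'a \<Rightarrow> 'a \<Rightarrow> nat" where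
  "cox_m G s t = group.ord G (s \<otimes>\<^bsub>G\<^esub> t)"

text \<open>Defining relators of the Coxeter presentation: (st)^m(s,t) for m(s,t) finite
  (for s = t this is the relator ss).\<close>
definition cox_relators :: "('a, 'b) monoid_scheme \<Rightarrow> 'a set \<Rightarrow> 'a list set" where
  "cox_relators G S = {concat (replicate (cox_m G s t) [s, t]) | s t. s \<in> S \<and> t \<in> S \<and> cox_m G s t > 0}"

text \<open>Congruence on words generated by the relators (equality in the presented group).\<close>
inductive cox_eq :: "('a, 'b) monoid_scheme \<Rightarrow> 'a set \<Rightarrow> 'a list \<Rightarrow> 'a list \<Rightarrow> bool"
  for G S where
  refl: "cox_eq G S u u"
| sym: "cox_eq G S u v \<Longrightarrow> cox_eq G S v u"
| trans: "cox_eq G S u v \<Longrightarrow> cox_eq G S v w \<Longrightarrow> cox_eq G S u w"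
| rel: "r \<in> cox_relators G S \<Longrightarrow> cox_eq G S (u @ r @ v) (u @ v)"

text \<open>(W,S) is a Coxeter system: W generated by the involutions S and presented by
  the relations (st)^m(s,t) = 1, i.e. every word over S representing 1 in W is
  a consequence of the defining relations.\<close>
definition coxeter_system :: "('a, 'b) monoid_scheme \<Rightarrow> 'a set \<Rightarrow> bool" where
  "coxeter_system G S \<longleftrightarrow> group G \<and> S \<subseteq> carrier G
     \<and> (\<forall>s\<in>S. s \<noteq> \<one>\<^bsub>G\<^esub> \<and> s \<otimes>\<^bsub>G\<^esub> s = \<one>\<^bsub>G\<^esub>)
     \<and> generate G S = carrier G
     \<and> (\<forall>ws. set ws \<subseteq> S \<and> wprod G ws = \<one>\<^bsub>G\<^esub> \<longrightarrow> cox_eq G S ws [])"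

definition cox_len :: "('a, 'b) monoid_scheme \<Rightarrow> 'a set \<Rightarrow> 'a \<Rightarrow> nat" where
  "cox_len G S w = (LEAST n. \<exists>ws. set ws \<subseteq> S \<and> length ws = n \<and> wprod G ws = w)"

definition reflections :: "('a, 'b) monoid_scheme \<Rightarrow> 'a set \<Rightarrow> 'a set" where
  "reflections G S = {w \<otimes>\<^bsub>G\<^esub> s \<otimes>\<^bsub>G\<^esub> inv\<^bsub>G\<^esub> w | w s. w \<in> carrier G \<and> s \<in> S}"

definition bruhat_le :: "('a, 'b) monoid_scheme \<Rightarrow> 'a set \<Rightarrow> 'a \<Rightarrow> 'a \<Rightarrow> bool" where
  "bruhat_le G S u w \<longleftrightarrow> u \<in> carrier G \<and> w \<in> carrier G \<and>
     (\<lambda>a b. \<exists>t\<in>reflections G S. b = a \<otimes>\<^bsub>G\<^esub> t \<and> cox_len G S a < cox_len G S b)\<^sup>*\<^sup>* u w"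

end

theory Submission
  imports Defs "HOL-Library.Multiset"
begin

fun refls :: "('a, 'b) monoid_scheme \<Rightarrow> 'a list \<Rightarrow> 'a list" where
  "refls G [] = []"
| "refls G (a # ws) = a # map (\<lambda>r. a \<otimes>\<^bsub>G\<^esub> r \<otimes>\<^bsub>G\<^esub> inv\<^bsub>G\<^esub> a) (refls G ws)"

definition cj :: "('a, 'b) monoid_scheme \<Rightarrow> 'a \<Rightarrow> 'a \<Rightarrow> 'a" where
  "cj G g r = g \<otimes>\<^bsub>G\<^esub> r \<otimes>\<^bsub>G\<^esub> inv\<^bsub>G\<^esub> g"

lemma refls_Cons: "refls G (a # ws) = a # map (cj G a) (refls G ws)"
  by (simp add: cj_def)

declare refls.simps(2)[simp del]

locale cox = group G for G :: "('a, 'b) monoid_scheme" (structure) +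
  fixes S :: "'a set"
  assumes S_sub: "S \<subseteq> carrier G"
    and S_inv: "s \<in> S \<Longrightarrow> s \<otimes> s = \<one>"
    and S_gen: "generate G S = carrier G"
    and S_pres: "set ws \<subseteq> S \<Longrightarrow> wprod G ws = \<one> \<Longrightarrow> cox_eq G S ws []"
begin

abbreviation len where "len \<equiv> cox_len G S"

lemma S_carr[simp]: "s \<in> S \<Longrightarrow> s \<in> carrier G" using S_sub by blast

lemma S_inv_eq[simp]: "s \<in> S \<Longrightarrow> inv s = s"
  using S_inv by (simp add: inv_equality)

lemma inv_cancel1[simp]: "g \<in> carrier G \<Longrightarrow> z \<in> carrier G \<Longrightarrow> inv g \<otimes> (g \<otimes> z) = z"
  by (simp add: m_assoc[symmetric])
lemma inv_cancel2[simp]: "g \<in> carrier G \<Longrightarrow> z \<in> carrier G \<Longrightarrow> g \<otimes> (inv g \<otimes> z) = z"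
  by (simp add: m_assoc[symmetric])

lemma S_cancel[simp]: "s \<in> S \<Longrightarrow> z \<in> carrier G \<Longrightarrow> s \<otimes> (s \<otimes> z) = z"
  by (simp add: m_assoc[symmetric] S_inv)

lemma wprod_Nil[simp]: "wprod G [] = \<one>" by (simp add: wprod_def)
lemma wprod_Cons[simp]: "wprod G (a # ws) = a \<otimes> wprod G ws" by (simp add: wprod_def)

lemma wprod_closed[simp]: "set ws \<subseteq> carrier G \<Longrightarrow> wprod G ws \<in> carrier G"
  by (induction ws) auto

lemma wprod_append: "set u \<subseteq> carrier G \<Longrightarrow> set v \<subseteq> carrier G \<Longrightarrow>
   wprod G (u @ v) = wprod G u \<otimes> wprod G v"
  by (induction u) (auto simp: m_assoc)

lemma subS: "set ws \<subseteq> S \<Longrightarrow> set ws \<subseteq> carrier G" using S_sub by blast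

lemma wprod_rev: "set v \<subseteq> S \<Longrightarrow> wprod G (rev v) = inv (wprod G v)"
proof (induction v)
  case (Cons a v)
  then have "set v \<subseteq> carrier G" "a \<in> carrier G" using S_sub by auto
  with Cons show ?case by (simp add: wprod_append inv_mult_group)
qed simp

lemma cj_closed[simp]: "g \<in> carrier G \<Longrightarrow> x \<in> carrier G \<Longrightarrow> cj G g x \<in> carrier G"
  by (simp add: cj_def)

lemma cj_cj: "g \<in> carrier G \<Longrightarrow> h \<in> carrier G \<Longrightarrow> x \<in> carrier G \<Longrightarrow> cj G g (cj G h x) = cj G (g \<otimes> h) x"
  by (simp add: cj_def m_assoc inv_mult_group)

lemma cj_one[simp]: "x \<in> carrier G \<Longrightarrow> cj G \<one> x = x"
  by (simp add: cj_def)

lemma cj_inv_cancel[simp]: "g \<in> carrier G \<Longrightarrow> x \<in> carrier G \<Longrightarrow> cj G g (cj G (inv g) x) = x"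
  by (simp add: cj_cj)

lemma cj_inj: "g \<in> carrier G \<Longrightarrow> x \<in> carrier G \<Longrightarrow> y \<in> carrier G \<Longrightarrow> cj G g x = cj G g y \<longleftrightarrow> x = y"
  by (simp add: cj_def)

lemma refls_closed: "set ws \<subseteq> carrier G \<Longrightarrow> set (refls G ws) \<subseteq> carrier G"
  by (induction ws) (auto simp: refls_Cons)

lemma refls_append: "set u \<subseteq> carrier G \<Longrightarrow> set v \<subseteq> carrier G \<Longrightarrow>
  refls G (u @ v) = refls G u @ map (cj G (wprod G u)) (refls G v)"
proof (induction u)
  case Nil
  then show ?case using refls_closed[of v] by (subst map_idI) auto
next
  case (Cons a u)
  then show ?case using refls_closed[of v] by (auto simp: refls_Cons cj_cj subset_iff)
qed

lemma refls_rev: "set v \<subseteq> S \<Longrightarrow> refls G (rev v) = rev (map (cj G (inv (wprod G v))) (refls G v))"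
proof (induction v)
  case (Cons a v)
  have c: "set v \<subseteq> carrier G" "a \<in> carrier G" using Cons(2) S_sub by auto
  have e1: "cj G (inv (wprod G v)) a = cj G (inv (a \<otimes> wprod G v)) a"
    using c by (simp add: cj_def inv_mult_group m_assoc)
  have e2: "cj G (inv (wprod G v)) r = cj G (inv (a \<otimes> wprod G v)) (cj G a r)" if "r \<in> carrier G" for r
    using c that by (simp add: cj_cj inv_mult_group m_assoc)
  show ?case using Cons c refls_closed[OF c(1)]
    by (auto simp: refls_Cons refls_append wprod_rev subS e1 intro!: map_cong e2)
qed simp


abbreviation cnt where "cnt ws r \<equiv> count (mset (refls G ws)) r"

lemma count_map_cj: "set L \<subseteq> carrier G \<Longrightarrow> g \<in> carrier G \<Longrightarrow> x \<in> carrier G \<Longrightarrow>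
  count (mset (map (cj G g) L)) (cj G g x) = count (mset L) x"
  by (induction L) (auto simp: cj_inj)

lemma count_map_cj': "set L \<subseteq> carrier G \<Longrightarrow> g \<in> carrier G \<Longrightarrow> x \<in> carrier G \<Longrightarrow>
  count (mset (map (cj G g) L)) x = count (mset L) (cj G (inv g) x)"
  using count_map_cj[of L g "cj G (inv g) x"] by simp

lemma wprod_rel: "s \<in> S \<Longrightarrow> t \<in> S \<Longrightarrow> wprod G (concat (replicate m [s,t])) = (s \<otimes> t) [^] m"
proof (induction m)
  case (Suc m)
  have "set (concat (replicate m [s,t])) \<subseteq> carrier G" using Suc by auto
  moreover have "(s \<otimes> t) [^] Suc m = (s \<otimes> t) \<otimes> (s \<otimes> t) [^] m"
    using Suc by (intro nat_pow_Suc2) auto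
  ultimately show ?case using Suc by (simp add: wprod_append m_assoc)
qed simp

lemma refls_rel: "s \<in> S \<Longrightarrow> t \<in> S \<Longrightarrow>
   refls G (concat (replicate m [s,t])) = map (\<lambda>i. (s \<otimes> t) [^] i \<otimes> s) [0..<2*m]"
proof (induction m)
  case 0 then show ?case by simp
next
  case (Suc m)
  have c: "s \<in> carrier G" "t \<in> carrier G" using Suc by auto
  have e: "cj G s (cj G t ((s \<otimes> t) [^] i \<otimes> s)) = (s \<otimes> t) [^] (i+2::nat) \<otimes> s" for i
  proof -
    have "(s \<otimes> t) [^] (i+2::nat) = (s \<otimes> t) \<otimes> (s \<otimes> t) [^] i \<otimes> (s \<otimes> t)"
      using c nat_pow_Suc2[of "s \<otimes> t" i] by (simp add: m_assoc)
    then show ?thesis using c Suc(2,3) by (simp add: cj_def m_assoc)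
  qed
  have u: "[0..<2 * Suc m] = 0 # 1 # map (\<lambda>i. i + 2) [0..<2*m]"
  proof -
    have "[0..<2 * Suc m] = 0 # 1 # [2..<2*m+2]" by (simp add: upt_conv_Cons numeral_2_eq_2)
    then show ?thesis by (simp only: map_add_upt)
  qed
  have "refls G (concat (replicate (Suc m) [s,t])) =
     s # cj G s t # map (\<lambda>i. cj G s (cj G t ((s \<otimes> t) [^] i \<otimes> s))) [0..<2*m]"
    by (simp add: refls_Cons Suc.IH[OF Suc(2,3)])
  also have "\<dots> = map (\<lambda>i. (s \<otimes> t) [^] i \<otimes> s) [0..<2 * Suc m]"
    unfolding u using c Suc(2,3) by (simp only: list.map e) (simp add: cj_def)
  finally show ?case .
qed

lemma refls_rel_even: "s \<in> S \<Longrightarrow> t \<in> S \<Longrightarrow> (s \<otimes> t) [^] m = \<one> \<Longrightarrow>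
   \<exists>L. refls G (concat (replicate m [s,t])) = L @ L \<and> set L \<subseteq> carrier G"
proof -
  assume a: "s \<in> S" "t \<in> S" "(s \<otimes> t) [^] m = \<one>"
  let ?f = "\<lambda>i. (s \<otimes> t) [^] i \<otimes> s"
  have f: "?f (i + m) = ?f i" for i
    using a by (simp add: nat_pow_mult[symmetric])
  have "[0..<2*m] = [0..<m] @ map (\<lambda>i. i + m) [0..<m]"
    by (simp add: map_add_upt mult_2 upt_add_eq_append[of 0 m m, simplified])
  then have "map ?f [0..<2*m] = map ?f [0..<m] @ map ?f [0..<m]"
    using f by simp
  then have "refls G (concat (replicate m [s,t])) = map ?f [0..<m] @ map ?f [0..<m]"
    by (subst refls_rel[OF a(1,2)])
  moreover have "set (map ?f [0..<m]) \<subseteq> carrier G" using a by auto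
  ultimately show ?thesis by blast
qed


lemma map_cj_one: "set L \<subseteq> carrier G \<Longrightarrow> map (cj G \<one>) L = L"
  by (subst map_idI) auto

lemma cox_eq_inv:
  "cox_eq G S a b \<Longrightarrow> (set a \<subseteq> S \<longleftrightarrow> set b \<subseteq> S) \<and> even (length a + length b) \<and>
     (set a \<subseteq> S \<longrightarrow> wprod G a = wprod G b \<and> (\<forall>r. even (cnt a r + cnt b r)))"
proof (induction rule: cox_eq.induct)
  case (refl u)
  then show ?case by simp
next
  case (sym u v)
  then show ?case by (simp add: add.commute)
next
  case (trans u v w)
  have e1: "even (length u + length w)"
    using trans.IH by (metis (no_types, lifting) add.commute add.left_commute even_add)
  have e2: "even (cnt u r + cnt w r)" if "set u \<subseteq> S" for r
    using trans.IH that by (metis (no_types, lifting) add.commute add.left_commute even_add)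
  show ?case using trans.IH e1 e2 by auto
next
  case (rel r u v)
  then obtain s t where st: "r = concat (replicate (cox_m G s t) [s, t])" "s \<in> S" "t \<in> S"
      "cox_m G s t > 0"
    unfolding cox_relators_def by blast
  define m where "m = cox_m G s t"
  have sc: "s \<otimes> t \<in> carrier G" using st by auto
  have pw: "(s \<otimes> t) [^] m = \<one>"
    unfolding m_def cox_m_def using pow_ord_eq_1[OF sc] by simp
  have rS: "set r \<subseteq> S" using st by (auto simp: m_def)
  have len: "length r = 2 * m" using st by (simp add: m_def length_concat sum_list_replicate)
  obtain L where L: "refls G r = L @ L" "set L \<subseteq> carrier G"
    using refls_rel_even[OF st(2,3) pw] st(1) m_def by blast
  have wr: "wprod G r = \<one>" using wprod_rel[OF st(2,3)] pw st(1) m_def by simp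
  have part3: "wprod G (u @ r @ v) = wprod G (u @ v) \<and> (\<forall>x. even (cnt (u @ r @ v) x + cnt (u @ v) x))"
    if uv: "set u \<subseteq> S" "set v \<subseteq> S"
  proof -
    have cu: "set u \<subseteq> carrier G" "set v \<subseteq> carrier G" "set r \<subseteq> carrier G"
      using uv rS subS by auto
    have w: "wprod G (u @ r @ v) = wprod G (u @ v)"
      using cu wr by (simp add: wprod_append)
    have rv: "refls G (r @ v) = L @ L @ refls G v"
      using cu L wr by (simp add: refls_append map_cj_one refls_closed)
    have ev: "even (cnt (u @ r @ v) x + cnt (u @ v) x)" for x
      using cu rv by (simp add: refls_append) argo
    show ?thesis using w ev by blast
  qed
  have i1: "set (u @ r @ v) \<subseteq> S \<longleftrightarrow> set (u @ v) \<subseteq> S" using rS by auto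
  have i2: "even (length (u @ r @ v) + length (u @ v))" using len by simp
  have i3: "set u \<subseteq> S \<and> set v \<subseteq> S" if "set (u @ r @ v) \<subseteq> S" using that by simp
  show ?case using i1 i2 i3 part3 by blast
qed

lemma par_eq:
  assumes "set a \<subseteq> S" "set b \<subseteq> S" "wprod G a = wprod G b"
  shows "even (cnt a r + cnt b r)" "even (length a + length b)"
proof -
  have ca: "set a \<subseteq> carrier G" "set b \<subseteq> carrier G" using assms subS by auto
  let ?g = "wprod G b"
  have g: "?g \<in> carrier G" using ca by simp
  have c1: "set (a @ rev b) \<subseteq> S" using assms by auto
  have c2: "wprod G (a @ rev b) = \<one>"
    using assms ca by (simp add: wprod_append wprod_rev)
  have ce: "cox_eq G S (a @ rev b) []" using S_pres[OF c1 c2] .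
  note I = cox_eq_inv[OF ce]
  have rb: "refls G (rev b) = rev (map (cj G (inv ?g)) (refls G b))"
    using refls_rev assms(2) .
  have mm: "map (cj G ?g) (rev (map (cj G (inv ?g)) (refls G b))) = rev (refls G b)"
    using refls_closed[OF ca(2)] g by (simp add: rev_map comp_def subset_iff) (intro map_idI, auto)
  have "refls G (a @ rev b) = refls G a @ rev (refls G b)"
    using ca assms(3) by (simp add: refls_append rb mm)
  then have "cnt (a @ rev b) r = cnt a r + cnt b r" by simp
  moreover have "even (cnt (a @ rev b) r)" using I c1 by simp
  ultimately show "even (cnt a r + cnt b r)" by simp
  show "even (length a + length b)" using I by simp
qed


lemma word_exists: "w \<in> carrier G \<Longrightarrow> \<exists>ws. set ws \<subseteq> S \<and> wprod G ws = w"
proof -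
  assume "w \<in> carrier G"
  then have "w \<in> generate G S" using S_gen by simp
  then show ?thesis
  proof (induction rule: generate.induct)
    case one
    then show ?case by (intro exI[of _ "[]"]) simp
  next
    case (incl h)
    then show ?case by (intro exI[of _ "[h]"]) simp
  next
    case (inv h)
    then show ?case by (intro exI[of _ "[h]"]) simp
  next
    case (eng h1 h2)
    then obtain u v where "set u \<subseteq> S" "wprod G u = h1" "set v \<subseteq> S" "wprod G v = h2" by blast
    then show ?case by (intro exI[of _ "u @ v"]) (simp add: wprod_append subS)
  qed
qed

lemma len_le: "set ws \<subseteq> S \<Longrightarrow> len (wprod G ws) \<le> length ws"
  unfolding cox_len_def by (rule Least_le) blast

lemma red_exists: "w \<in> carrier G \<Longrightarrow> \<exists>ws. set ws \<subseteq> S \<and> length ws = len w \<and> wprod G ws = w"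
proof -
  assume "w \<in> carrier G"
  then obtain ws where "set ws \<subseteq> S" "wprod G ws = w" using word_exists by blast
  then have "\<exists>n ws. set ws \<subseteq> S \<and> length ws = n \<and> wprod G ws = w" by blast
  from LeastI_ex[OF this] show ?thesis unfolding cox_len_def .
qed

lemma len_par: "set ws \<subseteq> S \<Longrightarrow> even (len (wprod G ws) + length ws)"
proof -
  assume a: "set ws \<subseteq> S"
  then obtain vs where "set vs \<subseteq> S" "length vs = len (wprod G ws)" "wprod G vs = wprod G ws"
    using red_exists[of "wprod G ws"] subS by auto
  then show ?thesis using par_eq(2)[of vs ws] a by simp
qed

lemma len_S: "w \<in> carrier G \<Longrightarrow> s \<in> S \<Longrightarrow> len (w \<otimes> s) = Suc (len w) \<or> len w = Suc (len (w \<otimes> s))"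
proof -
  assume a: "w \<in> carrier G" "s \<in> S"
  obtain ws where ws: "set ws \<subseteq> S" "length ws = len w" "wprod G ws = w" using red_exists a by blast
  obtain vs where vs: "set vs \<subseteq> S" "length vs = len (w \<otimes> s)" "wprod G vs = w \<otimes> s"
    using red_exists[of "w \<otimes> s"] a by auto
  have "wprod G (ws @ [s]) = w \<otimes> s" using ws a by (simp add: wprod_append subS)
  then have 1: "len (w \<otimes> s) \<le> Suc (len w)" using len_le[of "ws @ [s]"] ws a by simp
  have "wprod G (vs @ [s]) = w" using vs a by (simp add: wprod_append subS m_assoc S_inv)
  then have 2: "len w \<le> Suc (len (w \<otimes> s))" using len_le[of "vs @ [s]"] vs a by simp
  have "even (len (w \<otimes> s) + length (ws @ [s]))"
    using len_par[of "ws @ [s]"] ws a by (simp add: wprod_append subS)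
  then have 3: "even (len (w \<otimes> s) + Suc (len w))" using ws by simp
  show ?thesis using 1 2 3 by presburger
qed

lemma len_Sl: "w \<in> carrier G \<Longrightarrow> s \<in> S \<Longrightarrow> len (s \<otimes> w) = Suc (len w) \<or> len w = Suc (len (s \<otimes> w))"
proof -
  assume a: "w \<in> carrier G" "s \<in> S"
  obtain ws where ws: "set ws \<subseteq> S" "length ws = len w" "wprod G ws = w" using red_exists a by blast
  obtain vs where vs: "set vs \<subseteq> S" "length vs = len (s \<otimes> w)" "wprod G vs = s \<otimes> w"
    using red_exists[of "s \<otimes> w"] a by auto
  have "wprod G (s # ws) = s \<otimes> w" using ws a by simp
  then have 1: "len (s \<otimes> w) \<le> Suc (len w)" using len_le[of "s # ws"] ws a by simp
  have "wprod G (s # vs) = w" using vs a by (simp add: m_assoc[symmetric] S_inv)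
  then have 2: "len w \<le> Suc (len (s \<otimes> w))" using len_le[of "s # vs"] vs a by simp
  have "even (len (s \<otimes> w) + length (s # ws))"
    using len_par[of "s # ws"] ws a by simp
  then have 3: "even (len (s \<otimes> w) + Suc (len w))" using ws by simp
  show ?thesis using 1 2 3 by presburger
qed

lemma len_inv_le: "w \<in> carrier G \<Longrightarrow> len (inv w) \<le> len w"
proof -
  assume "w \<in> carrier G"
  then obtain ws where ws: "set ws \<subseteq> S" "length ws = len w" "wprod G ws = w" using red_exists by blast
  have "wprod G (rev ws) = inv w" using wprod_rev[OF ws(1)] ws(3) by simp
  moreover have "len (wprod G (rev ws)) \<le> length (rev ws)" using len_le[of "rev ws"] ws(1) by simp
  ultimately show ?thesis using ws(2) by simp
qed

lemma len_inv: "w \<in> carrier G \<Longrightarrow> len (inv w) = len w"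
proof -
  assume a: "w \<in> carrier G"
  have "len (inv (inv w)) \<le> len (inv w)" using a by (intro len_inv_le) simp
  then have "len w \<le> len (inv w)" using a by simp
  then show ?thesis using len_inv_le[OF a] by simp
qed

lemma refl_carr: "r \<in> reflections G S \<Longrightarrow> r \<in> carrier G"
  unfolding reflections_def by auto

lemma refl_sq: "r \<in> reflections G S \<Longrightarrow> r \<otimes> r = \<one>"
proof -
  assume "r \<in> reflections G S"
  then obtain w s where ws: "r = w \<otimes> s \<otimes> inv w" "w \<in> carrier G" "s \<in> S"
    unfolding reflections_def by blast
  have "w \<otimes> s \<otimes> inv w \<otimes> (w \<otimes> s \<otimes> inv w) = w \<otimes> (s \<otimes> (inv w \<otimes> (w \<otimes> (s \<otimes> inv w))))"
    using ws by (simp add: m_assoc)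
  also have "\<dots> = \<one>" using ws by simp
  finally show ?thesis using ws(1) by simp
qed

lemma refl_inv[simp]: "r \<in> reflections G S \<Longrightarrow> inv r = r"
  using refl_sq refl_carr by (simp add: inv_equality)

lemma refl_cj: "r \<in> reflections G S \<Longrightarrow> g \<in> carrier G \<Longrightarrow> cj G g r \<in> reflections G S"
  unfolding reflections_def
proof clarify
  fix w s assume a: "g \<in> carrier G" "w \<in> carrier G" "s \<in> S"
  then have "cj G g (w \<otimes> s \<otimes> inv w) = (g \<otimes> w) \<otimes> s \<otimes> inv (g \<otimes> w)"
    by (simp add: cj_def m_assoc inv_mult_group)
  then show "\<exists>w' s'. cj G g (w \<otimes> s \<otimes> inv w) = w' \<otimes> s' \<otimes> inv w' \<and> w' \<in> carrier G \<and> s' \<in> S"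
    using a by blast
qed

lemma S_refl: "s \<in> S \<Longrightarrow> s \<in> reflections G S"
  unfolding reflections_def by (intro CollectI exI[of _ \<one>] exI[of _ s]) simp

lemma refl_word: "r \<in> reflections G S \<Longrightarrow>
  \<exists>q. set q \<subseteq> S \<and> wprod G q = r \<and> odd (cnt q r) \<and> odd (length q)"
proof -
  assume "r \<in> reflections G S"
  then obtain a s where as: "r = a \<otimes> s \<otimes> inv a" "a \<in> carrier G" "s \<in> S"
    unfolding reflections_def by blast
  obtain ws where ws: "set ws \<subseteq> S" "wprod G ws = a" using word_exists as by blast
  let ?q = "ws @ s # rev ws"
  have cw: "set ws \<subseteq> carrier G" using ws subS by auto
  have r: "r = cj G a s" using as by (simp add: cj_def)
  have rc: "r \<in> carrier G" using as by simp
  have wq: "wprod G ?q = r" using ws cw as by (simp add: wprod_append wprod_rev m_assoc)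
  let ?L = "refls G ws"
  have Lc: "set ?L \<subseteq> carrier G" using refls_closed cw by blast
  have m: "map (cj G a \<circ> cj G s) (rev (map (cj G (inv a)) ?L)) = rev (map (cj G r) ?L)"
  proof -
    have e: "cj G a (cj G s (cj G (inv a) x)) = cj G r x" if "x \<in> carrier G" for x
      using that as by (simp add: cj_cj m_assoc)
    show ?thesis using Lc e by (simp add: rev_map subset_iff comp_def)
  qed
  have rq: "refls G ?q = ?L @ cj G a s # rev (map (cj G r) ?L)"
    using ws cw as(2,3) by (simp add: refls_append refls_Cons refls_rev m)
  have "cnt ?q r = cnt ws r + 1 + count (mset (map (cj G r) ?L)) r"
    using rq r by simp
  also have "count (mset (map (cj G r) ?L)) r = cnt ws r"
    using count_map_cj[OF Lc, of r r] rc by (simp add: cj_def m_assoc refl_sq)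
  finally have o1: "odd (cnt ?q r)" by simp
  have o2: "odd (length ?q)" by simp
  have "set ?q \<subseteq> S" using ws as by simp
  then show ?thesis using wq o1 o2 by blast
qed

lemma len_refl: "w \<in> carrier G \<Longrightarrow> r \<in> reflections G S \<Longrightarrow> len (w \<otimes> r) \<noteq> len w"
proof
  assume a: "w \<in> carrier G" "r \<in> reflections G S" and e: "len (w \<otimes> r) = len w"
  obtain q where q: "set q \<subseteq> S" "wprod G q = r" "odd (length q)" using refl_word a(2) by blast
  obtain ws where ws: "set ws \<subseteq> S" "length ws = len w" "wprod G ws = w" using red_exists a by blast
  have "wprod G (ws @ q) = w \<otimes> r" using ws q by (simp add: wprod_append subS)
  then have "even (len (w \<otimes> r) + length (ws @ q))" using len_par[of "ws @ q"] ws q by simp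
  then show False using e ws q by simp
qed


lemma length_refls[simp]: "length (refls G ws) = length ws"
  by (induction ws) (auto simp: refls_Cons)

lemma refls_del: "set ws \<subseteq> S \<Longrightarrow> i < length ws \<Longrightarrow>
   refls G ws ! i \<otimes> wprod G ws = wprod G (take i ws @ drop (Suc i) ws)"
proof (induction ws arbitrary: i)
  case Nil then show ?case by simp
next
  case (Cons a ws)
  have c: "a \<in> carrier G" "set ws \<subseteq> S" "a \<in> S" using Cons by auto
  have c2: "set ws \<subseteq> carrier G" using c subS by blast
  show ?case
  proof (cases i)
    case 0
    then show ?thesis using c c2 by (simp add: refls_Cons)
  next
    case (Suc j)
    then have j: "j < length ws" using Cons by simp
    have rc: "refls G ws ! j \<in> carrier G" using refls_closed[OF c2] j by (simp add: subset_iff)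
    have "refls G (a # ws) ! i \<otimes> wprod G (a # ws) = a \<otimes> (refls G ws ! j \<otimes> wprod G ws)"
      using Suc c c2 j rc by (simp add: refls_Cons cj_def m_assoc)
    also have "\<dots> = a \<otimes> wprod G (take j ws @ drop (Suc j) ws)"
      using Cons.IH[OF c(2) j] by simp
    finally show ?thesis using Suc by simp
  qed
qed

lemma del_len: "i < length ws \<Longrightarrow> length (take i ws @ drop (Suc i) ws) = length ws - 1"
  by simp

lemma del_S: "set ws \<subseteq> S \<Longrightarrow> set (take i ws @ drop (Suc i) ws) \<subseteq> S"
  using set_take_subset[of i ws] set_drop_subset[of "Suc i" ws] by auto

lemma cj_self: "r \<in> reflections G S \<Longrightarrow> cj G r r = r"
  using refl_sq refl_carr by (simp add: cj_def)

lemma in_refls_del: "set ws \<subseteq> S \<Longrightarrow> r \<in> set (refls G ws) \<Longrightarrow>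
   \<exists>i<length ws. r \<otimes> wprod G ws = wprod G (take i ws @ drop (Suc i) ws)"
proof -
  assume a: "set ws \<subseteq> S" "r \<in> set (refls G ws)"
  then obtain i where "i < length ws" "refls G ws ! i = r" by (auto simp: in_set_conv_nth)
  then show ?thesis using refls_del[of ws i] a by auto
qed

lemma exch_left:
  assumes ws: "set ws \<subseteq> S" "length ws = len (wprod G ws)"
    and r: "r \<in> reflections G S" and lt: "len (r \<otimes> wprod G ws) < len (wprod G ws)"
  shows "\<exists>i<length ws. r \<otimes> wprod G ws = wprod G (take i ws @ drop (Suc i) ws)"
proof -
  let ?w = "wprod G ws"
  have wc: "?w \<in> carrier G" using ws subS by simp
  have rc: "r \<in> carrier G" using r refl_carr by blast
  have "r \<in> set (refls G ws)"
  proof (rule ccontr)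
    assume nr: "r \<notin> set (refls G ws)"
    then have c0: "cnt ws r = 0" by simp
    obtain vs where vs: "set vs \<subseteq> S" "length vs = len (r \<otimes> ?w)" "wprod G vs = r \<otimes> ?w"
      using red_exists[of "r \<otimes> ?w"] wc rc by auto
    obtain q where q: "set q \<subseteq> S" "wprod G q = r" "odd (cnt q r)" using refl_word r by blast
    have vsc: "set vs \<subseteq> carrier G" "set q \<subseteq> carrier G" using vs q subS by auto
    have wqv: "wprod G (q @ vs) = ?w"
      using vsc vs q rc wc by (simp add: wprod_append m_assoc[symmetric] refl_sq[OF r])
    have "even (cnt (q @ vs) r + cnt ws r)" using par_eq(1)[of "q @ vs" ws r] q vs ws wqv by simp
    then have ev: "even (cnt (q @ vs) r)" using c0 by simp
    have "cnt (q @ vs) r = cnt q r + count (mset (map (cj G r) (refls G vs))) r"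
      using vsc q by (simp add: refls_append)
    also have "count (mset (map (cj G r) (refls G vs))) r = cnt vs r"
      using count_map_cj[OF refls_closed[OF vsc(1)] rc rc] cj_self[OF r] by simp
    finally have "odd (cnt vs r)" using ev q by simp
    then have "r \<in> set (refls G vs)" by (metis count_mset_0_iff even_zero)
    then obtain i where i: "i < length vs" "r \<otimes> wprod G vs = wprod G (take i vs @ drop (Suc i) vs)"
      using in_refls_del vs(1) by blast
    have "r \<otimes> wprod G vs = ?w" using vs rc wc by (simp add: m_assoc[symmetric] refl_sq[OF r])
    then have "len ?w \<le> length vs - 1" using i len_le[OF del_S[OF vs(1)], of i] by simp
    then show False using lt vs(2) by linarith
  qed
  then show ?thesis using in_refls_del ws(1) by blast
qed

lemma exch_right:
  assumes ws: "set ws \<subseteq> S" "length ws = len (wprod G ws)"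
    and r: "r \<in> reflections G S" and lt: "len (wprod G ws \<otimes> r) < len (wprod G ws)"
  shows "\<exists>i<length ws. wprod G ws \<otimes> r = wprod G (take i ws @ drop (Suc i) ws)"
proof -
  let ?w = "wprod G ws"
  have wc: "?w \<in> carrier G" using ws subS by simp
  have rc: "r \<in> carrier G" using r refl_carr by blast
  have e: "cj G ?w r \<otimes> ?w = ?w \<otimes> r" using wc rc by (simp add: cj_def m_assoc)
  show ?thesis using exch_left[OF ws refl_cj[OF r wc]] e lt by simp
qed

lemma del_refl: "set ws \<subseteq> S \<Longrightarrow> i < length ws \<Longrightarrow>
  \<exists>r'\<in>reflections G S. wprod G (take i ws @ drop (Suc i) ws) = wprod G ws \<otimes> r'"
proof -
  assume a: "set ws \<subseteq> S" "i < length ws"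
  let ?p = "wprod G (take i ws)" and ?q = "wprod G (drop (Suc i) ws)" and ?s = "ws ! i"
  have sS: "?s \<in> S" using a by (auto simp: subset_iff)
  have tS: "set (take i ws) \<subseteq> S" "set (drop (Suc i) ws) \<subseteq> S"
    using a set_take_subset[of i ws] set_drop_subset[of "Suc i" ws] by auto
  have pc: "?p \<in> carrier G" "?q \<in> carrier G" using tS subS by auto
  have "ws = take i ws @ ?s # drop (Suc i) ws" using a(2) by (rule id_take_nth_drop)
  then have "wprod G ws = wprod G (take i ws @ ?s # drop (Suc i) ws)" by simp
  also have "\<dots> = ?p \<otimes> (?s \<otimes> ?q)"
    using tS sS subS[OF tS(1)] subS[OF tS(2)] by (simp add: wprod_append)
  finally have w: "wprod G ws = ?p \<otimes> (?s \<otimes> ?q)" .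
  have d: "wprod G (take i ws @ drop (Suc i) ws) = ?p \<otimes> ?q"
    using subS[OF tS(1)] subS[OF tS(2)] by (simp add: wprod_append)
  have rr: "inv ?q \<otimes> ?s \<otimes> inv (inv ?q) \<in> reflections G S"
    unfolding reflections_def using pc sS by blast
  have "?p \<otimes> (?s \<otimes> ?q) \<otimes> (inv ?q \<otimes> ?s \<otimes> inv (inv ?q)) = ?p \<otimes> ?q"
    using pc sS by (simp add: m_assoc)
  then have "wprod G (take i ws @ drop (Suc i) ws) = wprod G ws \<otimes> (inv ?q \<otimes> ?s \<otimes> inv (inv ?q))"
    using w d by simp
  then show ?thesis using rr by blast
qed


definition br where "br a b \<longleftrightarrow> (\<exists>t\<in>reflections G S. b = a \<otimes> t \<and> len a < len b)"

lemma bruhat_iff: "bruhat_le G S u w \<longleftrightarrow> u \<in> carrier G \<and> w \<in> carrier G \<and> br\<^sup>*\<^sup>* u w"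
proof -
  have "(\<lambda>a b. \<exists>t\<in>reflections G S. b = a \<otimes> t \<and> len a < len b) = br"
    by (simp add: br_def fun_eq_iff)
  then show ?thesis unfolding bruhat_le_def by simp
qed

lemma br_carr: "br a b \<Longrightarrow> a \<in> carrier G \<Longrightarrow> b \<in> carrier G"
  unfolding br_def using refl_carr by auto

lemma br_lt: "br a b \<Longrightarrow> len a < len b"
  unfolding br_def by auto

lemma brs_carr: "br\<^sup>*\<^sup>* a b \<Longrightarrow> a \<in> carrier G \<Longrightarrow> b \<in> carrier G"
  by (induction rule: rtranclp_induct) (auto simp: br_carr)

lemma br_rS: "u \<in> carrier G \<Longrightarrow> t \<in> S \<Longrightarrow> len u < len (u \<otimes> t) \<Longrightarrow> br u (u \<otimes> t)"
  unfolding br_def using S_refl by blast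

lemma br_rS': "u \<in> carrier G \<Longrightarrow> t \<in> S \<Longrightarrow> len (u \<otimes> t) < len u \<Longrightarrow> br (u \<otimes> t) u"
proof -
  assume a: "u \<in> carrier G" "t \<in> S" "len (u \<otimes> t) < len u"
  have "u = (u \<otimes> t) \<otimes> t" using a by (simp add: m_assoc S_inv)
  then show ?thesis unfolding br_def using a S_refl by metis
qed

lemma br_lS: "u \<in> carrier G \<Longrightarrow> s \<in> S \<Longrightarrow> len u < len (s \<otimes> u) \<Longrightarrow> br u (s \<otimes> u)"
proof -
  assume a: "u \<in> carrier G" "s \<in> S" "len u < len (s \<otimes> u)"
  have r: "cj G (inv u) s \<in> reflections G S" using refl_cj[OF S_refl[OF a(2)]] a by simp
  have "s \<otimes> u = u \<otimes> cj G (inv u) s" using a by (simp add: cj_def m_assoc)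
  then show ?thesis unfolding br_def using a r by metis
qed

lemma br_lS': "u \<in> carrier G \<Longrightarrow> s \<in> S \<Longrightarrow> len (s \<otimes> u) < len u \<Longrightarrow> br (s \<otimes> u) u"
proof -
  assume a: "u \<in> carrier G" "s \<in> S" "len (s \<otimes> u) < len u"
  have "br (s \<otimes> u) (s \<otimes> (s \<otimes> u))" using br_lS[of "s \<otimes> u" s] a by simp
  then show ?thesis using a by simp
qed

lemma br_mulS: "u \<in> carrier G \<Longrightarrow> r \<in> reflections G S \<Longrightarrow> t \<in> S \<Longrightarrow>
  len (u \<otimes> t) < len (u \<otimes> r \<otimes> t) \<Longrightarrow> br (u \<otimes> t) (u \<otimes> r \<otimes> t)"
proof -
  assume a: "u \<in> carrier G" "r \<in> reflections G S" "t \<in> S" "len (u \<otimes> t) < len (u \<otimes> r \<otimes> t)"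
  have rc: "r \<in> carrier G" using a refl_carr by blast
  have r: "cj G t r \<in> reflections G S" using refl_cj[OF a(2)] a by simp
  have "u \<otimes> r \<otimes> t = u \<otimes> t \<otimes> cj G t r" using a rc by (simp add: cj_def m_assoc)
  then show ?thesis unfolding br_def using a r by metis
qed

lemma key:
  assumes u: "u \<in> carrier G" and r: "r \<in> reflections G S" and ur: "len u < len (u \<otimes> r)"
    and t: "t \<in> S" and ut: "len u < len (u \<otimes> t)" and urt: "len (u \<otimes> r \<otimes> t) < len (u \<otimes> r)"
  shows "u = u \<otimes> r \<otimes> t \<or> br (u \<otimes> t) (u \<otimes> r \<otimes> t)"
proof -
  have rc: "r \<in> carrier G" using r refl_carr by blast
  let ?u1 = "u \<otimes> r"
  have u1c: "?u1 \<in> carrier G" using u rc by simp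
  obtain vs where vs: "set vs \<subseteq> S" "length vs = len (?u1 \<otimes> t)" "wprod G vs = ?u1 \<otimes> t"
    using red_exists[of "?u1 \<otimes> t"] u1c t by auto
  let ?ws = "vs @ [t]"
  have wsS: "set ?ws \<subseteq> S" using vs t by simp
  have vsc: "set vs \<subseteq> carrier G" using vs subS by blast
  have wp: "wprod G ?ws = ?u1" using vs vsc t u1c by (simp add: wprod_append m_assoc S_inv)
  have wl: "length ?ws = len (wprod G ?ws)" using wp vs len_S[OF u1c t] urt by auto
  have "len (wprod G ?ws \<otimes> r) < len (wprod G ?ws)"
    using wp u rc ur by (simp add: m_assoc refl_sq[OF r])
  then obtain i where i: "i < length ?ws" "wprod G ?ws \<otimes> r = wprod G (take i ?ws @ drop (Suc i) ?ws)"
    using exch_right[OF wsS wl r] by blast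
  have uu: "wprod G ?ws \<otimes> r = u" using wp u rc by (simp add: m_assoc refl_sq[OF r])
  show ?thesis
  proof (cases "i = length vs")
    case True
    then have "u = wprod G vs" using i uu by simp
    then show ?thesis using vs by simp
  next
    case False
    then have il: "i < length vs" using i by simp
    let ?d = "take i vs @ drop (Suc i) vs"
    have dS: "set ?d \<subseteq> S" using del_S[OF vs(1)] .
    have dc: "set ?d \<subseteq> carrier G" using dS subS by blast
    have "u = wprod G (?d @ [t])" using i uu il by simp
    then have "u = wprod G ?d \<otimes> t" using dc t by (simp add: wprod_append m_assoc)
    then have ut': "u \<otimes> t = wprod G ?d" using dc t by (simp add: m_assoc S_inv)
    obtain r' where r': "r' \<in> reflections G S" "wprod G ?d = wprod G vs \<otimes> r'"
      using del_refl[OF vs(1) il] by blast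
    have r'c: "r' \<in> carrier G" using r' refl_carr by blast
    have e: "u \<otimes> r \<otimes> t = u \<otimes> t \<otimes> r'"
      using ut' r' vs r'c u1c t by (simp add: m_assoc refl_sq)
    have "len (u \<otimes> t) \<le> length ?d" using ut' len_le[OF dS] by simp
    then have "len (u \<otimes> t) < len (u \<otimes> r \<otimes> t)" using il vs(2) by simp
    then have "br (u \<otimes> t) (u \<otimes> r \<otimes> t)" unfolding br_def using e r' by blast
    then show ?thesis by simp
  qed
qed


lemmas cstep = converse_rtranclp_into_rtranclp

lemma LPr:
  assumes "br\<^sup>*\<^sup>* u w" "u \<in> carrier G" and t: "t \<in> S" and wt: "len (w \<otimes> t) < len w"
  shows "br\<^sup>*\<^sup>* (u \<otimes> t) w \<and> (len (u \<otimes> t) < len u \<longrightarrow> br\<^sup>*\<^sup>* (u \<otimes> t) (w \<otimes> t))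
       \<and> (len u < len (u \<otimes> t) \<longrightarrow> br\<^sup>*\<^sup>* u (w \<otimes> t))"
  using assms(1,2)
proof (induction rule: converse_rtranclp_induct)
  case base
  have "br (w \<otimes> t) w" using br_rS'[OF base t wt] .
  then show ?case using wt by auto
next
  case (step y z)
  obtain r where r: "r \<in> reflections G S" "z = y \<otimes> r" "len y < len z"
    using step.hyps(1) unfolding br_def by blast
  have yc: "y \<in> carrier G" using step.prems .
  have zc: "z \<in> carrier G" using br_carr[OF step.hyps(1) yc] .
  have rc: "r \<in> carrier G" using r refl_carr by blast
  note IH = step.IH[OF zc]
  have zw: "br\<^sup>*\<^sup>* z w" using step.hyps(2) .
  have yz: "br y z" using step.hyps(1) .
  have ly: "len (y \<otimes> t) = Suc (len y) \<or> len y = Suc (len (y \<otimes> t))" using len_S[OF yc t] .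
  have lz: "len (z \<otimes> t) = Suc (len z) \<or> len z = Suc (len (z \<otimes> t))" using len_S[OF zc t] .
  have zt: "z \<otimes> t = y \<otimes> r \<otimes> t" using r by simp
  have P1: "br\<^sup>*\<^sup>* (y \<otimes> t) w"
  proof (cases "len (y \<otimes> t) < len y")
    case True
    then have "br (y \<otimes> t) y" using br_rS'[OF yc t] by simp
    then show ?thesis using yz zw by (meson cstep)
  next
    case False
    then have yup: "len y < len (y \<otimes> t)" using ly by auto
    show ?thesis
    proof (cases "len z < len (z \<otimes> t)")
      case True
      then have "br (y \<otimes> t) (z \<otimes> t)" using br_mulS[OF yc r(1) t] zt r(3) yup lz ly by auto
      then show ?thesis using IH by (meson cstep)
    next
      case False
      then have zdown: "len (z \<otimes> t) < len z" using lz by auto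
      have "y = y \<otimes> r \<otimes> t \<or> br (y \<otimes> t) (y \<otimes> r \<otimes> t)"
        using key[OF yc r(1) _ t yup] r zdown zt by simp
      then show ?thesis
      proof
        assume "y = y \<otimes> r \<otimes> t"
        then have "z \<otimes> t = y" using zt by simp
        then have "y \<otimes> t = (z \<otimes> t) \<otimes> t" by simp
        also have "\<dots> = z" using zc t by (simp add: m_assoc S_inv)
        finally have "y \<otimes> t = z" .
        then show ?thesis using zw by simp
      next
        assume "br (y \<otimes> t) (y \<otimes> r \<otimes> t)"
        moreover have "br (z \<otimes> t) z" using br_rS'[OF zc t zdown] .
        ultimately show ?thesis using zw zt by (metis cstep)
      qed
    qed
  qed
  have P2: "len (y \<otimes> t) < len y \<longrightarrow> br\<^sup>*\<^sup>* (y \<otimes> t) (w \<otimes> t)"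
  proof
    assume ydown: "len (y \<otimes> t) < len y"
    show "br\<^sup>*\<^sup>* (y \<otimes> t) (w \<otimes> t)"
    proof (cases "len (z \<otimes> t) < len z")
      case True
      then have "br (y \<otimes> t) (z \<otimes> t)"
        using br_mulS[OF yc r(1) t] zt r(3) ydown lz ly by auto
      then show ?thesis using IH True by (meson cstep)
    next
      case False
      then have "br\<^sup>*\<^sup>* z (w \<otimes> t)" using IH lz by auto
      moreover have "br (y \<otimes> t) y" using br_rS'[OF yc t ydown] .
      ultimately show ?thesis using yz by (meson cstep)
    qed
  qed
  have P3: "len y < len (y \<otimes> t) \<longrightarrow> br\<^sup>*\<^sup>* y (w \<otimes> t)"
  proof
    assume yup: "len y < len (y \<otimes> t)"
    show "br\<^sup>*\<^sup>* y (w \<otimes> t)"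
    proof (cases "len z < len (z \<otimes> t)")
      case True
      then show ?thesis using IH yz by (meson cstep)
    next
      case False
      then have zdown: "len (z \<otimes> t) < len z" using lz by auto
      then have zwt: "br\<^sup>*\<^sup>* (z \<otimes> t) (w \<otimes> t)" using IH by auto
      have "y = y \<otimes> r \<otimes> t \<or> br (y \<otimes> t) (y \<otimes> r \<otimes> t)"
        using key[OF yc r(1) _ t yup] r zdown zt by simp
      then show ?thesis
      proof
        assume "y = y \<otimes> r \<otimes> t"
        then show ?thesis using zwt zt by simp
      next
        assume "br (y \<otimes> t) (y \<otimes> r \<otimes> t)"
        moreover have "br y (y \<otimes> t)" using br_rS[OF yc t yup] .
        ultimately show ?thesis using zwt zt by (metis cstep)
      qed
    qed
  qed
  show ?case using P1 P2 P3 by blast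
qed


lemma br_inv: "br a b \<Longrightarrow> a \<in> carrier G \<Longrightarrow> br (inv a) (inv b)"
proof -
  assume a: "br a b" "a \<in> carrier G"
  then obtain r where r: "r \<in> reflections G S" "b = a \<otimes> r" "len a < len b" unfolding br_def by blast
  have rc: "r \<in> carrier G" using r refl_carr by blast
  have e: "inv b = inv a \<otimes> cj G a r" using r rc a by (simp add: cj_def m_assoc inv_mult_group)
  have "len (inv a) < len (inv b)" using r a rc by (simp add: len_inv)
  then show ?thesis unfolding br_def using e refl_cj[OF r(1) a(2)] by blast
qed

lemma brs_inv: "br\<^sup>*\<^sup>* a b \<Longrightarrow> a \<in> carrier G \<Longrightarrow> br\<^sup>*\<^sup>* (inv a) (inv b)"
proof (induction rule: rtranclp_induct)
  case base then show ?case by simp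
next
  case (step y z)
  have "y \<in> carrier G" using brs_carr step by blast
  then have "br (inv y) (inv z)" using br_inv step by blast
  then show ?case using step by (meson rtranclp.rtrancl_into_rtrancl)
qed

lemma LPl:
  assumes u: "br\<^sup>*\<^sup>* u w" "u \<in> carrier G" and s: "s \<in> S" and sw: "len (s \<otimes> w) < len w"
  shows "br\<^sup>*\<^sup>* (s \<otimes> u) w \<and> (len (s \<otimes> u) < len u \<longrightarrow> br\<^sup>*\<^sup>* (s \<otimes> u) (s \<otimes> w))
       \<and> (len u < len (s \<otimes> u) \<longrightarrow> br\<^sup>*\<^sup>* u (s \<otimes> w))"
proof -
  have wc: "w \<in> carrier G" using brs_carr u by blast
  have sc: "s \<in> carrier G" using s by simp
  have e1: "inv w \<otimes> s = inv (s \<otimes> w)" using wc s by (simp add: inv_mult_group)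
  have e2: "inv u \<otimes> s = inv (s \<otimes> u)" using u s by (simp add: inv_mult_group)
  have l1: "len (inv w \<otimes> s) = len (s \<otimes> w)" using e1 wc sc len_inv by simp
  have l2: "len (inv u \<otimes> s) = len (s \<otimes> u)" using e2 u sc len_inv by simp
  have l3: "len (inv w) = len w" "len (inv u) = len u" using len_inv wc u by auto
  have "br\<^sup>*\<^sup>* (inv u) (inv w)" using brs_inv u by blast
  note L = LPr[OF this _ s, unfolded l1 l2 l3 e1 e2]
  have L': "br\<^sup>*\<^sup>* (inv (s \<otimes> u)) (inv w) \<and> (len (s \<otimes> u) < len u \<longrightarrow> br\<^sup>*\<^sup>* (inv (s \<otimes> u)) (inv (s \<otimes> w)))
       \<and> (len u < len (s \<otimes> u) \<longrightarrow> br\<^sup>*\<^sup>* (inv u) (inv (s \<otimes> w)))"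
    using L u sw len_inv[of "s \<otimes> w"] len_inv[of "s \<otimes> u"] wc sc by simp
  have i: "\<And>a b. a \<in> carrier G \<Longrightarrow> b \<in> carrier G \<Longrightarrow> br\<^sup>*\<^sup>* (inv a) (inv b) \<Longrightarrow> br\<^sup>*\<^sup>* a b"
    using brs_inv by (metis inv_closed inv_inv)
  show ?thesis using L' i[of "s \<otimes> u" w] i[of "s \<otimes> u" "s \<otimes> w"] i[of u "s \<otimes> w"] u wc sc by auto
qed

lemma deo:
  assumes v: "v \<in> carrier G" and s: "s \<in> S" and t: "t \<in> S"
    and sv: "len v < len (s \<otimes> v)" and vt: "len v < len (v \<otimes> t)"
  shows "s \<otimes> v = v \<otimes> t \<or> len (s \<otimes> v \<otimes> t) = len v + 2"
proof -
  have svc: "s \<otimes> v \<in> carrier G" using v s by simp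
  have l1: "len (s \<otimes> v) = Suc (len v)" using len_Sl[OF v s] sv by auto
  have l2: "len (v \<otimes> t) = Suc (len v)" using len_S[OF v t] vt by auto
  show ?thesis
  proof (cases "len (s \<otimes> v \<otimes> t) = Suc (len (s \<otimes> v))")
    case True then show ?thesis using l1 by simp
  next
    case False
    then have down: "len (s \<otimes> v \<otimes> t) < len (s \<otimes> v)" using len_S[OF svc t] by auto
    obtain vs where vs: "set vs \<subseteq> S" "length vs = len v" "wprod G vs = v" using red_exists v by blast
    have ws: "set (s # vs) \<subseteq> S" "length (s # vs) = len (wprod G (s # vs))" using vs s l1 by auto
    have "len (wprod G (s # vs) \<otimes> t) < len (wprod G (s # vs))" using down vs by simp
    then obtain i where i: "i < length (s # vs)"
      "wprod G (s # vs) \<otimes> t = wprod G (take i (s # vs) @ drop (Suc i) (s # vs))"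
      using exch_right[OF ws S_refl[OF t]] by blast
    show ?thesis
    proof (cases i)
      case 0
      then have "s \<otimes> v \<otimes> t = v" using i vs by simp
      then have "s \<otimes> v \<otimes> t \<otimes> t = v \<otimes> t" by simp
      then show ?thesis using v s t by (simp add: m_assoc S_inv)
    next
      case (Suc j)
      let ?d = "take j vs @ drop (Suc j) vs"
      have dS: "set ?d \<subseteq> S" using del_S[OF vs(1)] .
      have dc: "set ?d \<subseteq> carrier G" using dS subS by blast
      have "s \<otimes> v \<otimes> t = s \<otimes> wprod G ?d" using i Suc vs by simp
      then have "s \<otimes> (s \<otimes> v \<otimes> t) = s \<otimes> (s \<otimes> wprod G ?d)" by simp
      then have "v \<otimes> t = wprod G ?d" using v s t dc by (simp add: m_assoc)
      then have "len (v \<otimes> t) \<le> length ?d" using len_le[OF dS] by simp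
      then show ?thesis using l2 vs(2) i Suc by simp
    qed
  qed
qed


lemma main:
  assumes x: "x \<in> carrier G" and s: "s \<in> S" and t: "t \<in> S"
    and y: "y = s \<otimes> x \<otimes> t" and l: "len x = len y"
    and x': "x' \<in> carrier G" and le: "br\<^sup>*\<^sup>* x' x"
  shows "br\<^sup>*\<^sup>* x' y \<or> (br\<^sup>*\<^sup>* (s \<otimes> x' \<otimes> t) y \<and> len (s \<otimes> x' \<otimes> t) \<le> len x')"
proof (cases "y = x")
  case True then show ?thesis using le by simp
next
  case False
  have sc: "s \<in> carrier G" "t \<in> carrier G" using s t by auto
  have yc: "y \<in> carrier G" using y x sc by simp
  have sx: "len (s \<otimes> x) = Suc (len x) \<or> len x = Suc (len (s \<otimes> x))" using len_Sl[OF x s] .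
  then show ?thesis
  proof
    assume B: "len (s \<otimes> x) = Suc (len x)"
    let ?w = "s \<otimes> x"
    have wc: "?w \<in> carrier G" using x sc by simp
    have yw: "y = ?w \<otimes> t" using y by simp
    have wt: "len (?w \<otimes> t) < len ?w" using B l yw by simp
    have "br x ?w" using br_lS[OF x s] B by simp
    then have xw: "br\<^sup>*\<^sup>* x' ?w" using le by (meson rtranclp.rtrancl_into_rtrancl)
    note L = LPr[OF xw x' t wt, folded yw]
    show ?thesis
    proof (cases "len x' < len (x' \<otimes> t)")
      case True then show ?thesis using L by blast
    next
      case False
      then have x'd: "len x' = Suc (len (x' \<otimes> t))" using len_S[OF x' t] by auto
      let ?v = "x' \<otimes> t"
      have vc: "?v \<in> carrier G" using x' sc by simp
      have vy: "br\<^sup>*\<^sup>* ?v y" using L x'd by simp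
      have e: "s \<otimes> ?v = s \<otimes> x' \<otimes> t" using x' sc by (simp add: m_assoc)
      show ?thesis
      proof (cases "len (s \<otimes> ?v) < len ?v")
        case True
        then have "br (s \<otimes> ?v) ?v" using br_lS'[OF vc s] by simp
        then have "br\<^sup>*\<^sup>* (s \<otimes> ?v) y" using vy by (meson cstep)
        then show ?thesis using e True x'd by simp
      next
        case False
        then have svl: "len (s \<otimes> ?v) = len x'" using len_Sl[OF vc s] x'd by auto
        show ?thesis
        proof (cases "len (s \<otimes> y) < len y")
          case True
          then have "br\<^sup>*\<^sup>* (s \<otimes> ?v) y" using LPl[OF vy vc s] by blast
          then show ?thesis using e svl by simp
        next
          case False
          then have syu: "len (s \<otimes> y) = Suc (len y)" using len_Sl[OF yc s] by auto
          have "s \<otimes> y = x \<otimes> t" using y x sc s by (simp add: m_assoc)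
          then have xt: "len x < len (x \<otimes> t)" using syu l by simp
          have "s \<otimes> x = x \<otimes> t \<or> len (s \<otimes> x \<otimes> t) = len x + 2"
            using deo[OF x s t _ xt] B by simp
          then show ?thesis
          proof
            assume "s \<otimes> x = x \<otimes> t"
            then have "y = x" using y x sc t by (simp add: m_assoc S_inv)
            then show ?thesis using False \<open>y \<noteq> x\<close> by simp
          next
            assume "len (s \<otimes> x \<otimes> t) = len x + 2"
            then show ?thesis using l y by simp
          qed
        qed
      qed
    qed
  next
    assume C: "len x = Suc (len (s \<otimes> x))"
    let ?v0 = "s \<otimes> x"
    have v0c: "?v0 \<in> carrier G" using x sc by simp
    have sv0: "s \<otimes> ?v0 = x" using x s by simp
    have v0t: "?v0 \<otimes> t = y" using y by simp
    have "s \<otimes> ?v0 = ?v0 \<otimes> t \<or> len (s \<otimes> ?v0 \<otimes> t) = len ?v0 + 2"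
      using deo[OF v0c s t] sv0 v0t C l by simp
    moreover have "s \<otimes> ?v0 \<noteq> ?v0 \<otimes> t" using sv0 v0t False by simp
    ultimately have "len (s \<otimes> ?v0 \<otimes> t) = len ?v0 + 2" by blast
    then have xtl: "len (x \<otimes> t) = Suc (len x)" using sv0 C by simp
    let ?w = "x \<otimes> t"
    have wc: "?w \<in> carrier G" using x sc by simp
    have yw: "y = s \<otimes> ?w" using y x sc by (simp add: m_assoc)
    have sw: "len (s \<otimes> ?w) < len ?w" using xtl l yw by simp
    have "br x ?w" using br_rS[OF x t] xtl by simp
    then have xw: "br\<^sup>*\<^sup>* x' ?w" using le by (meson rtranclp.rtrancl_into_rtrancl)
    note L = LPl[OF xw x' s sw, folded yw]
    show ?thesis
    proof (cases "len x' < len (s \<otimes> x')")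
      case True then show ?thesis using L by blast
    next
      case False
      then have x'd: "len x' = Suc (len (s \<otimes> x'))" using len_Sl[OF x' s] by auto
      let ?v = "s \<otimes> x'"
      have vc: "?v \<in> carrier G" using x' sc by simp
      have vy: "br\<^sup>*\<^sup>* ?v y" using L x'd by simp
      show ?thesis
      proof (cases "len (?v \<otimes> t) < len ?v")
        case True
        then have "br (?v \<otimes> t) ?v" using br_rS'[OF vc t] by simp
        then have "br\<^sup>*\<^sup>* (?v \<otimes> t) y" using vy by (meson cstep)
        then show ?thesis using True x'd by simp
      next
        case False
        then have vtl: "len (?v \<otimes> t) = len x'" using len_S[OF vc t] x'd by auto
        show ?thesis
        proof (cases "len (y \<otimes> t) < len y")
          case True
          then have "br\<^sup>*\<^sup>* (?v \<otimes> t) y" using LPr[OF vy vc t] by blast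
          then show ?thesis using vtl by simp
        next
          case False
          then have ytu: "len (y \<otimes> t) = Suc (len y)" using len_S[OF yc t] by auto
          have "y \<otimes> t = s \<otimes> x" using y x sc t by (simp add: m_assoc S_inv)
          then show ?thesis using ytu C l by simp
        qed
      qed
    qed
  qed
qed

end

theorem lemma3p3:
  fixes G :: "('a, 'b) monoid_scheme" and S :: "'a set"
  assumes "coxeter_system G S"
    and "x \<in> carrier G" and "y \<in> carrier G" and "s \<in> S" and "t \<in> S"
    and "y = s \<otimes>\<^bsub>G\<^esub> x \<otimes>\<^bsub>G\<^esub> t"
    and "cox_len G S x = cox_len G S y"
    and "x' \<in> carrier G" and "bruhat_le G S x' x"
  shows "bruhat_le G S x' y \<or>
         (bruhat_le G S (s \<otimes>\<^bsub>G\<^esub> x' \<otimes>\<^bsub>G\<^esub> t) y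
          \<and> cox_len G S (s \<otimes>\<^bsub>G\<^esub> x' \<otimes>\<^bsub>G\<^esub> t) \<le> cox_len G S x')"
proof -
  have cs: "group G" "S \<subseteq> carrier G" "\<forall>s\<in>S. s \<noteq> \<one>\<^bsub>G\<^esub> \<and> s \<otimes>\<^bsub>G\<^esub> s = \<one>\<^bsub>G\<^esub>"
     "generate G S = carrier G"
     "\<forall>ws. set ws \<subseteq> S \<and> wprod G ws = \<one>\<^bsub>G\<^esub> \<longrightarrow> cox_eq G S ws []"
    using assms(1) unfolding coxeter_system_def by blast+
  interpret cox G S
  proof (rule cox.intro)
    show "group G" by (rule cs(1))
    show "cox_axioms G S"
    proof (rule cox_axioms.intro)
      show "S \<subseteq> carrier G" by (rule cs(2))
      show "\<And>s. s \<in> S \<Longrightarrow> s \<otimes>\<^bsub>G\<^esub> s = \<one>\<^bsub>G\<^esub>" using cs(3) by blast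
      show "generate G S = carrier G" by (rule cs(4))
      show "\<And>ws. set ws \<subseteq> S \<Longrightarrow> wprod G ws = \<one>\<^bsub>G\<^esub> \<Longrightarrow> cox_eq G S ws []"
        using cs(5) by blast
    qed
  qed
  have "(cox.br G S)\<^sup>*\<^sup>* x' x" using assms(9) bruhat_iff by blast
  then have m: "(cox.br G S)\<^sup>*\<^sup>* x' y \<or> ((cox.br G S)\<^sup>*\<^sup>* (s \<otimes>\<^bsub>G\<^esub> x' \<otimes>\<^bsub>G\<^esub> t) y \<and> cox_len G S (s \<otimes>\<^bsub>G\<^esub> x' \<otimes>\<^bsub>G\<^esub> t) \<le> cox_len G S x')"
    using main[OF assms(2,4,5,6,7,8)] by blast
  have c: "s \<otimes>\<^bsub>G\<^esub> x' \<otimes>\<^bsub>G\<^esub> t \<in> carrier G" using assms(4,5,8) by simp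
  show ?thesis
  proof (cases "(cox.br G S)\<^sup>*\<^sup>* x' y")
    case True
    then show ?thesis using assms(3,8) by (simp add: bruhat_iff)
  next
    case False
    then show ?thesis using m c assms(3) by (simp add: bruhat_iff)
  qed
qed

end
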